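(* Let $(R,d)$ be a fusion algebra with a finite generating set $X\subseteq I$. Then $\mathrm{F\o l}^{\mathrm{inn}}_X(R,d)\le1-\frac{1}{\omega_X(R,d)}$, and consequently $\mathrm{F\o l}^{\mathrm{inn}}(R,d)\le1-\frac{1}{\omega(R,d)}$.
   Context: A fusion algebra $(R,d)$ consists of a set $I$ with a distinguished $e$ and involution $\alpha\mapsto\bar\alpha$, a unital ring structure on $R=\mathbb{Z}[I]$ with unit $e$ and $\xi\eta=\sum_\alpha N^\alpha_{\xi,\eta}\alpha$, $N^\alpha_{\xi,\eta}\in\mathbb{Z}_{\ge0}$ finitely many nonzero, the involution extending to a $\mathbb{Z}$-linear antimultiplicative involution, Frobenius reciprocity $N^\alpha_{\xi,\eta}=N^\xi_{\alpha,\bar\eta}=N^\eta_{\bar\xi,\alpha}$, and a $\mathbb{Z}$-linear multiplicative $d:R\to\mathbb{R}$ with $d(\bar\alpha)=d(\alpha)\ge1$ on $I$. $\mathrm{supp}(r)$ is the set of $\alpha\in I$ with nonzero coefficient in $r$; $\alpha\subseteq r$ means $\alpha\in\mathrm{supp}(r)$. $|A|=\sum_{\alpha\in A}d(\alpha)^2$. A finite generating set is a finite $X\subseteq I$ with $\bar X=X$ such that every $\alpha\in I$ satisfies $\alpha\subseteq x_1\cdots x_n$ for some $x_i\in X$. $\ell_X(e)=0$, otherwise $\ell_X(\alpha)$ is the least such $n\ge1$; $B_X(n)=\{\alpha:\ell_X(\alpha)\le n\}$; $\omega_X(R,d)=\lim_n|B_X(n)|^{1/n}$ (exists), $\omega(R,d)=\inf_X\omega_X(R,d)$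 over finite generating sets. The inner boundary is $\partial^{\mathrm{inn}}_X(A)=\{\alpha\in A:\exists x\in X,\ \mathrm{supp}(\alpha x)\not\subseteq A\}$; $\mathrm{F\o l}^{\mathrm{inn}}_X(R,d)=\inf_A|\partial^{\mathrm{inn}}_X(A)|/|A|$ over nonempty finite $A\subseteq I$, and $\mathrm{F\o l}^{\mathrm{inn}}(R,d)=\inf_X\mathrm{F\o l}^{\mathrm{inn}}_X(R,d)$ over finite generating sets. *)

theory Defs
  imports Complex_Main
begin

text \<open>The index set I is the type 'a. Elements of R = Z[I] are represented as
functions 'a => int (finitely supported ones). The structure constants are
N a xi eta = N^a_{xi,eta}.\<close>

definition supp :: "('a \<Rightarrow> int) \<Rightarrow> 'a set" where
  "supp r = {a. r a \<noteq> 0}"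

definition basis :: "'a \<Rightarrow> 'a \<Rightarrow> int" where
  "basis x = (\<lambda>a. if a = x then 1 else 0)"

definition fmult :: "('a \<Rightarrow> 'a \<Rightarrow> 'a \<Rightarrow> nat) \<Rightarrow> ('a \<Rightarrow> int) \<Rightarrow> ('a \<Rightarrow> int) \<Rightarrow> ('a \<Rightarrow> int)" where
  "fmult N r s = (\<lambda>a. \<Sum>xi\<in>supp r. \<Sum>eta\<in>supp s. r xi * s eta * int (N a xi eta))"

definition fusion_algebra ::
  "'a \<Rightarrow> ('a \<Rightarrow> 'a) \<Rightarrow> ('a \<Rightarrow> 'a \<Rightarrow> 'a \<Rightarrow> nat) \<Rightarrow> ('a \<Rightarrow> real) \<Rightarrow> bool" where
  "fusion_algebra e bar N d \<longleftrightarrow>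
     (\<forall>xi eta. finite {a. N a xi eta \<noteq> 0}) \<and>
     (\<forall>xi eta zeta. fmult N (fmult N (basis xi) (basis eta)) (basis zeta)
                   = fmult N (basis xi) (fmult N (basis eta) (basis zeta))) \<and>
     (\<forall>xi. fmult N (basis e) (basis xi) = basis xi \<and> fmult N (basis xi) (basis e) = basis xi) \<and>
     (\<forall>a. bar (bar a) = a) \<and>
     (\<forall>a xi eta. N (bar a) (bar eta) (bar xi) = N a xi eta) \<and>
     (\<forall>a xi eta. N a xi eta = N xi a (bar eta) \<and> N a xi eta = N eta (bar xi) a) \<and>
     (\<forall>xi eta. d xi * d eta = (\<Sum>a\<in>{a. N a xi eta \<noteq> 0}. real (N a xi eta) * d a)) \<and>
     d e = 1 \<and>
     (\<forall>a. d (bar a) = d a \<and> d a \<ge> 1)"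

fun prodl :: "'a \<Rightarrow> ('a \<Rightarrow> 'a \<Rightarrow> 'a \<Rightarrow> nat) \<Rightarrow> 'a list \<Rightarrow> ('a \<Rightarrow> int)" where
  "prodl e N [] = basis e"
| "prodl e N (x # xs) = fmult N (basis x) (prodl e N xs)"

definition fgen_set :: "'a \<Rightarrow> ('a \<Rightarrow> 'a) \<Rightarrow> ('a \<Rightarrow> 'a \<Rightarrow> 'a \<Rightarrow> nat) \<Rightarrow> 'a set \<Rightarrow> bool" where
  "fgen_set e bar N X \<longleftrightarrow> finite X \<and> bar ` X = X \<and>
     (\<forall>a. \<exists>xs. xs \<noteq> [] \<and> set xs \<subseteq> X \<and> a \<in> supp (prodl e N xs))"

definition word_len :: "'a \<Rightarrow> ('a \<Rightarrow> 'a \<Rightarrow> 'a \<Rightarrow> nat) \<Rightarrow> 'a set \<Rightarrow> 'a \<Rightarrow> nat" where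
  "word_len e N X a = (if a = e then 0 else
     (LEAST n. n \<ge> 1 \<and> (\<exists>xs. length xs = n \<and> set xs \<subseteq> X \<and> a \<in> supp (prodl e N xs))))"

definition ball_X :: "'a \<Rightarrow> ('a \<Rightarrow> 'a \<Rightarrow> 'a \<Rightarrow> nat) \<Rightarrow> 'a set \<Rightarrow> nat \<Rightarrow> 'a set" where
  "ball_X e N X n = {a. word_len e N X a \<le> n}"

definition dsize :: "('a \<Rightarrow> real) \<Rightarrow> 'a set \<Rightarrow> real" where
  "dsize d A = (\<Sum>a\<in>A. (d a)^2)"

definition growth_X :: "'a \<Rightarrow> ('a \<Rightarrow> 'a \<Rightarrow> 'a \<Rightarrow> nat) \<Rightarrow> ('a \<Rightarrow> real) \<Rightarrow> 'a set \<Rightarrow> real" where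
  "growth_X e N d X = lim (\<lambda>n. root n (dsize d (ball_X e N X n)))"

definition growth :: "'a \<Rightarrow> ('a \<Rightarrow> 'a) \<Rightarrow> ('a \<Rightarrow> 'a \<Rightarrow> 'a \<Rightarrow> nat) \<Rightarrow> ('a \<Rightarrow> real) \<Rightarrow> real" where
  "growth e bar N d = Inf {growth_X e N d X | X. fgen_set e bar N X}"

definition inner_boundary :: "('a \<Rightarrow> 'a \<Rightarrow> 'a \<Rightarrow> nat) \<Rightarrow> 'a set \<Rightarrow> 'a set \<Rightarrow> 'a set" where
  "inner_boundary N X A = {a\<in>A. \<exists>x\<in>X. \<not> supp (fmult N (basis a) (basis x)) \<subseteq> A}"

definition folner_inn_X :: "('a \<Rightarrow> 'a \<Rightarrow> 'a \<Rightarrow> nat) \<Rightarrow> ('a \<Rightarrow> real) \<Rightarrow> 'a set \<Rightarrow> real" where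
  "folner_inn_X N d X = Inf {dsize d (inner_boundary N X A) / dsize d A | A. finite A \<and> A \<noteq> {}}"

definition folner_inn :: "'a \<Rightarrow> ('a \<Rightarrow> 'a) \<Rightarrow> ('a \<Rightarrow> 'a \<Rightarrow> 'a \<Rightarrow> nat) \<Rightarrow> ('a \<Rightarrow> real) \<Rightarrow> real" where
  "folner_inn e bar N d = Inf {folner_inn_X N d X | X. fgen_set e bar N X}"

end

theory Submission imports Defs begin

lemma sum_UN_le:
  fixes f :: "'b \<Rightarrow> real"
  assumes "finite I" "\<And>i. i \<in> I \<Longrightarrow> finite (A i)" "\<And>x. f x \<ge> 0"
  shows "sum f (\<Union>i\<in>I. A i) \<le> (\<Sum>i\<in>I. sum f (A i))"
  using assms
proof (induction I rule: finite_induct)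
  case empty then show ?case by simp
next
  case (insert i I)
  have "sum f (\<Union>j\<in>insert i I. A j) = sum f (A i \<union> (\<Union>j\<in>I. A j))" by simp
  also have "\<dots> \<le> sum f (A i) + sum f (\<Union>j\<in>I. A j)"
    using sum_Un[of "A i" "\<Union>j\<in>I. A j" f] insert
    by (simp add: sum_nonneg)
  also have "\<dots> \<le> sum f (A i) + (\<Sum>j\<in>I. sum f (A j))" using insert by auto
  finally show ?case using insert by simp
qed

lemma basis_nonneg: "basis x a \<ge> 0" by (simp add: basis_def)
lemma supp_basis[simp]: "supp (basis x) = {x}" by (auto simp: supp_def basis_def)

lemma fmult_nonneg:
  assumes "\<And>a. r a \<ge> 0" "\<And>a. s a \<ge> 0"
  shows "fmult N r s a \<ge> 0"
  unfolding fmult_def using assms by (auto intro!: sum_nonneg)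

definition SS :: "('a \<Rightarrow> 'a \<Rightarrow> 'a \<Rightarrow> nat) \<Rightarrow> 'a \<Rightarrow> 'a \<Rightarrow> 'a set" where
  "SS N x y = {a. N a x y \<noteq> 0}"

lemma supp_fmult:
  assumes "finite (supp r)" "finite (supp s)" "\<And>a. r a \<ge> 0" "\<And>a. s a \<ge> 0"
  shows "supp (fmult N r s) = (\<Union>xi\<in>supp r. \<Union>eta\<in>supp s. SS N xi eta)"
proof -
  have pos: "r a > 0" if "a \<in> supp r" for a using that assms(3)[of a] by (auto simp: supp_def)
  have pos2: "s a > 0" if "a \<in> supp s" for a using that assms(4)[of a] by (auto simp: supp_def)
  have "a \<in> supp (fmult N r s) \<longleftrightarrow> (\<exists>xi\<in>supp r. \<exists>eta\<in>supp s. N a xi eta \<noteq> 0)" for a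
  proof -
    have "a \<in> supp (fmult N r s) \<longleftrightarrow> (\<Sum>xi\<in>supp r. \<Sum>eta\<in>supp s. r xi * s eta * int (N a xi eta)) \<noteq> 0"
      by (simp add: supp_def fmult_def)
    also have "\<dots> \<longleftrightarrow> (\<exists>xi\<in>supp r. (\<Sum>eta\<in>supp s. r xi * s eta * int (N a xi eta)) \<noteq> 0)"
      using assms by (subst sum_nonneg_eq_0_iff) (auto intro!: sum_nonneg)
    also have "\<dots> \<longleftrightarrow> (\<exists>xi\<in>supp r. \<exists>eta\<in>supp s. r xi * s eta * int (N a xi eta) \<noteq> 0)"
      using assms by (subst sum_nonneg_eq_0_iff) (auto intro!: sum_nonneg)
    also have "\<dots> \<longleftrightarrow> (\<exists>xi\<in>supp r. \<exists>eta\<in>supp s. N a xi eta \<noteq> 0)"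
    proof -
      have "r xi * s eta * int (N a xi eta) \<noteq> 0 \<longleftrightarrow> N a xi eta \<noteq> 0"
        if "xi \<in> supp r" "eta \<in> supp s" for xi eta
        using that unfolding supp_def by simp
      then show ?thesis by (intro bex_cong refl) simp
    qed
    finally show ?thesis .
  qed
  then show ?thesis by (auto simp: SS_def)
qed

locale FA =
  fixes e :: 'a and bar :: "'a \<Rightarrow> 'a" and N :: "'a \<Rightarrow> 'a \<Rightarrow> 'a \<Rightarrow> nat" and d :: "'a \<Rightarrow> real"
  assumes fa: "fusion_algebra e bar N d"
begin

lemma finS: "finite (SS N x y)"
  using fa by (simp add: fusion_algebra_def SS_def)

lemma fmult_bb: "fmult N (basis x) (basis y) = (\<lambda>a. int (N a x y))"
  unfolding fmult_def supp_basis by (simp add: basis_def)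

lemma supp_int: "supp (\<lambda>a. int (N a x y)) = SS N x y"
  by (simp add: supp_def SS_def)

lemma supp_bb: "supp (fmult N (basis x) (basis y)) = SS N x y"
  by (simp add: fmult_bb supp_int)

lemma assocS: "(\<Union>a\<in>SS N x y. SS N a z) = (\<Union>b\<in>SS N y z. SS N x b)"
proof -
  have A: "fmult N (fmult N (basis x) (basis y)) (basis z) = fmult N (basis x) (fmult N (basis y) (basis z))"
    using fa by (simp add: fusion_algebra_def)
  have "supp (fmult N (fmult N (basis x) (basis y)) (basis z)) = (\<Union>a\<in>SS N x y. SS N a z)"
    by (subst supp_fmult) (auto simp: supp_int finS fmult_bb basis_nonneg)
  moreover have "supp (fmult N (basis x) (fmult N (basis y) (basis z))) = (\<Union>b\<in>SS N y z. SS N x b)"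
    by (subst supp_fmult) (auto simp: supp_int finS fmult_bb basis_nonneg)
  ultimately show ?thesis using A by simp
qed

lemma unitL: "SS N e x = {x}"
proof -
  have "fmult N (basis e) (basis x) = basis x" using fa by (simp add: fusion_algebra_def)
  then show ?thesis by (metis supp_bb supp_basis)
qed

lemma unitR: "SS N x e = {x}"
proof -
  have "fmult N (basis x) (basis e) = basis x" using fa by (simp add: fusion_algebra_def)
  then show ?thesis by (metis supp_bb supp_basis)
qed

fun Pl :: "'a list \<Rightarrow> 'a set" where
  "Pl [] = {e}"
| "Pl (x # xs) = (\<Union>eta\<in>Pl xs. SS N x eta)"

lemma Pl_fin: "finite (Pl xs)"
  by (induction xs) (auto simp: finS)

lemma prodl_Pl: "supp (prodl e N xs) = Pl xs \<and> (\<forall>a. prodl e N xs a \<ge> 0)"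
proof (induction xs)
  case Nil then show ?case by (simp add: basis_nonneg)
next
  case (Cons x xs)
  then show ?case
  proof -
    have f: "finite (supp (prodl e N xs))" using Cons Pl_fin by simp
    have "supp (fmult N (basis x) (prodl e N xs)) = (\<Union>xi\<in>supp (basis x). \<Union>eta\<in>supp (prodl e N xs). SS N xi eta)"
      by (rule supp_fmult) (use f Cons basis_nonneg in auto)
    then have "supp (prodl e N (x # xs)) = (\<Union>eta\<in>supp (prodl e N xs). SS N x eta)" by simp
    moreover have "\<forall>a. prodl e N (x # xs) a \<ge> 0"
    proof -
      have nn: "\<And>a. prodl e N xs a \<ge> 0" using Cons by blast
      have "fmult N (basis x) (prodl e N xs) a \<ge> 0" for a
        by (rule fmult_nonneg) (simp_all add: basis_nonneg nn)
      then show ?thesis by simp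
    qed
    ultimately show ?thesis using Cons by simp
  qed
qed

lemma Pl_append: "Pl (ys @ zs) = (\<Union>a\<in>Pl ys. \<Union>b\<in>Pl zs. SS N a b)"
proof (induction ys)
  case Nil then show ?case by (simp add: unitL)
next
  case (Cons y ys)
  have "Pl ((y # ys) @ zs) = (\<Union>c\<in>(\<Union>a\<in>Pl ys. \<Union>b\<in>Pl zs. SS N a b). SS N y c)"
    using Cons by simp
  also have "\<dots> = (\<Union>a\<in>Pl ys. \<Union>b\<in>Pl zs. \<Union>c\<in>SS N a b. SS N y c)" by blast
  also have "\<dots> = (\<Union>a\<in>Pl ys. \<Union>b\<in>Pl zs. \<Union>c\<in>SS N y a. SS N c b)"
    by (simp add: assocS)
  also have "\<dots> = (\<Union>c\<in>Pl (y # ys). \<Union>b\<in>Pl zs. SS N c b)" by auto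
  finally show ?case .
qed

lemma Pl_single: "Pl [x] = {x}" by (simp add: unitR)

lemma d_prod: "d x * d y = (\<Sum>a\<in>SS N x y. real (N a x y) * d a)"
  using fa by (simp add: fusion_algebra_def SS_def)

lemma d_ge1: "d a \<ge> 1" using fa by (simp add: fusion_algebra_def)

lemma d_nonneg: "d a \<ge> 0" using d_ge1[of a] by linarith

lemma d_e: "d e = 1" using fa by (simp add: fusion_algebra_def)

lemma sum_d_le: "(\<Sum>a\<in>SS N x y. d a) \<le> d x * d y"
  unfolding d_prod
proof (rule sum_mono)
  fix a assume "a \<in> SS N x y"
  then have "real (N a x y) \<ge> 1" by (simp add: SS_def)
  moreover have "d a \<ge> 0" using d_ge1[of a] by simp
  ultimately show "d a \<le> real (N a x y) * d a" using mult_right_mono[of 1 "real (N a x y)" "d a"] by simp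
qed

lemma d_le: "a \<in> SS N x y \<Longrightarrow> d a \<le> d x * d y"
proof -
  assume "a \<in> SS N x y"
  then have "d a \<le> (\<Sum>a\<in>SS N x y. d a)"
    by (rule member_le_sum) (simp_all add: finS d_nonneg)
  then show ?thesis using sum_d_le[of x y] by simp
qed

lemma sum_d2_le: "(\<Sum>a\<in>SS N x y. (d a)^2) \<le> (d x * d y)^2"
proof -
  have "(\<Sum>a\<in>SS N x y. (d a)^2) \<le> (\<Sum>a\<in>SS N x y. d a * (d x * d y))"
  proof (rule sum_mono)
    fix a assume "a \<in> SS N x y"
    then have "d a \<le> d x * d y" by (rule d_le)
    moreover have "d a \<ge> 0" using d_ge1[of a] by simp
    ultimately show "(d a)^2 \<le> d a * (d x * d y)" by (simp add: power2_eq_square mult_left_mono)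
  qed
  also have "\<dots> = (\<Sum>a\<in>SS N x y. d a) * (d x * d y)" by (simp add: sum_distrib_right)
  also have "\<dots> \<le> (d x * d y) * (d x * d y)"
    by (rule mult_right_mono[OF sum_d_le]) (simp add: d_nonneg)
  finally show ?thesis by (simp add: power2_eq_square)
qed

end

lemma fekete_aux:
  fixes a :: "nat \<Rightarrow> real"
  assumes sub: "\<And>n m. a (n + m) \<le> a n + a m"
  shows "a (q * m + r) \<le> real q * a m + a r"
proof (induction q)
  case 0 then show ?case by simp
next
  case (Suc q)
  have "a (Suc q * m + r) = a (m + (q * m + r))" by (simp add: algebra_simps)
  also have "\<dots> \<le> a m + a (q * m + r)" by (rule sub)
  also have "\<dots> \<le> a m + (real q * a m + a r)" using Suc by simp
  finally show ?case by (simp add: algebra_simps)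
qed

lemma fekete:
  fixes a :: "nat \<Rightarrow> real"
  assumes sub: "\<And>n m. a (n + m) \<le> a n + a m" and nn: "\<And>n. a n \<ge> 0"
  shows "(\<lambda>n. a n / real n) \<longlonglongrightarrow> Inf ((\<lambda>n. a n / real n) ` {1..})"
proof -
  define S where "S = (\<lambda>n. a n / real n) ` {1..}"
  define L where "L = Inf S"
  have Sne: "S \<noteq> {}" by (auto simp: S_def)
  have bdd: "bdd_below S" unfolding S_def by (rule bdd_belowI[of _ 0]) (auto simp: nn)
  have lower: "L \<le> a n / real n" if "n \<ge> 1" for n
    unfolding L_def by (rule cInf_lower[OF _ bdd]) (use that in \<open>auto simp: S_def\<close>)
  show ?thesis unfolding S_def[symmetric] L_def[symmetric]
  proof (rule LIMSEQ_I)
    fix r :: real assume r: "r > 0"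
    have "L < L + r / 2" using r by simp
    then obtain s where "s \<in> S" "s < L + r / 2"
      using cInf_less_iff[OF Sne bdd] unfolding L_def by blast
    then obtain m where m: "m \<ge> 1" "a m / real m < L + r / 2" by (auto simp: S_def)
    define M where "M = (\<Sum>k<m. a k)"
    have M0: "M \<ge> 0" unfolding M_def by (simp add: sum_nonneg nn)
    have aM: "a k \<le> M" if "k < m" for k
      unfolding M_def by (rule member_le_sum) (use that nn in auto)
    obtain n0 :: nat where n0: "real n0 > 2 * M / r" using reals_Archimedean2 by blast
    show "\<exists>no. \<forall>n\<ge>no. norm (a n / real n - L) < r"
    proof (intro exI allI impI)
      fix n assume n: "n \<ge> max 1 (Suc n0)"
      then have npos: "real n > 0" by simp
      define q where "q = n div m"
      define t where "t = n mod m"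
      have nqt: "n = q * m + t" by (simp add: q_def t_def)
      have tm: "t < m" using m(1) by (simp add: t_def)
      have "a n \<le> real q * a m + a t" using fekete_aux[OF sub] nqt by metis
      also have "\<dots> \<le> real q * a m + M" using aM[OF tm] by simp
      finally have an: "a n \<le> real q * a m + M" .
      have qm: "real q * real m \<le> real n" using nqt by (metis le_add1 of_nat_le_iff of_nat_mult)
      have "real q * a m = (real q * real m) * (a m / real m)" using m(1) by simp
      also have "\<dots> \<le> real n * (a m / real m)"
        by (rule mult_right_mono[OF qm]) (simp add: nn)
      finally have "real q * a m \<le> real n * (a m / real m)" .
      with an have "a n / real n \<le> (real n * (a m / real m) + M) / real n"
        using npos by (simp add: divide_right_mono)
      also have "\<dots> = a m / real m + M / real n" using npos by (simp add: field_simps)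
      finally have an2: "a n / real n \<le> a m / real m + M / real n" .
      have Mn: "M / real n < r / 2"
      proof -
        have "real n > 2 * M / r" using n n0 by simp
        then have "real n * r > 2 * M" using r by (simp add: field_simps)
        then have "M < r / 2 * real n" by (simp add: mult.commute)
        with npos show ?thesis by (simp add: divide_less_eq)
      qed
      have "a n / real n < L + r" using an2 Mn m(2) by linarith
      moreover have "L \<le> a n / real n" using lower n by simp
      ultimately show "norm (a n / real n - L) < r" by simp
    qed
  qed
qed

lemma root_conv:
  fixes b :: "nat \<Rightarrow> real"
  assumes ge1: "\<And>n. b n \<ge> 1" and sub: "\<And>n m. b (n + m) \<le> b n * b m"
  shows "convergent (\<lambda>n. root n (b n))"
proof -
  define a where "a = (\<lambda>n. ln (b n))"
  have bpos: "b n > 0" for n using ge1[of n] by simp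
  have "a (n + m) \<le> a n + a m" for n m
  proof -
    have "ln (b (n + m)) \<le> ln (b n * b m)"
      using sub[of n m] bpos[of "n+m"] bpos[of n] bpos[of m] by simp
    then show ?thesis unfolding a_def using bpos[of n] bpos[of m] by (simp add: ln_mult)
  qed
  moreover have "a n \<ge> 0" for n unfolding a_def using ge1[of n] by simp
  ultimately have lim: "(\<lambda>n. a n / real n) \<longlonglongrightarrow> Inf ((\<lambda>n. a n / real n) ` {1..})"
    by (rule fekete)
  have "(\<lambda>n. exp (a n / real n)) \<longlonglongrightarrow> exp (Inf ((\<lambda>n. a n / real n) ` {1..}))"
    by (rule tendsto_exp[OF lim])
  moreover have "eventually (\<lambda>n. exp (a n / real n) = root n (b n)) sequentially"
  proof (rule eventually_sequentiallyI[of 1])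
    fix n :: nat assume "n \<ge> 1"
    then show "exp (a n / real n) = root n (b n)"
      using bpos[of n] by (simp add: root_powr_inverse powr_def a_def)
  qed
  ultimately have "(\<lambda>n. root n (b n)) \<longlonglongrightarrow> exp (Inf ((\<lambda>n. a n / real n) ` {1..}))"
    by (rule Lim_transform_eventually)
  then show ?thesis by (rule convergentI)
qed


locale FAX = FA e bar N d for e :: 'a and bar N d +
  fixes X :: "'a set"
  assumes fg: "fgen_set e bar N X"
begin

lemma Xfin: "finite X" using fg by (simp add: fgen_set_def)

lemma supp_prodl: "supp (prodl e N xs) = Pl xs" using prodl_Pl by blast

lemma wl_e: "word_len e N X e = 0" by (simp add: word_len_def)

lemma wl_le:
  assumes "set ys \<subseteq> X" "a \<in> Pl ys"
  shows "word_len e N X a \<le> length ys"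
proof (cases "a = e")
  case True then show ?thesis by (simp add: wl_e)
next
  case False
  then have "ys \<noteq> []" using assms(2) by auto
  then have "length ys \<ge> 1" by (cases ys) auto
  then have "(LEAST n. n \<ge> 1 \<and> (\<exists>xs. length xs = n \<and> set xs \<subseteq> X \<and> a \<in> supp (prodl e N xs))) \<le> length ys"
    by (intro Least_le) (use assms in \<open>auto simp: supp_prodl\<close>)
  then show ?thesis using False by (simp add: word_len_def)
qed

lemma wl_ex: "\<exists>ys. set ys \<subseteq> X \<and> length ys = word_len e N X a \<and> a \<in> Pl ys"
proof (cases "a = e")
  case True then show ?thesis by (intro exI[of _ "[]"]) (simp add: wl_e)
next
  case False
  have "\<exists>xs. xs \<noteq> [] \<and> set xs \<subseteq> X \<and> a \<in> supp (prodl e N xs)"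
    using fg unfolding fgen_set_def by blast
  then obtain xs where xs: "xs \<noteq> []" "set xs \<subseteq> X" "a \<in> supp (prodl e N xs)"
    by blast
  have "length xs \<ge> 1" using xs(1) by (cases xs) auto
  then have "\<exists>n. n \<ge> 1 \<and> (\<exists>xs. length xs = n \<and> set xs \<subseteq> X \<and> a \<in> supp (prodl e N xs))"
    using xs by blast
  then have "(\<lambda>n. n \<ge> 1 \<and> (\<exists>xs. length xs = n \<and> set xs \<subseteq> X \<and> a \<in> supp (prodl e N xs)))
        (LEAST n. n \<ge> 1 \<and> (\<exists>xs. length xs = n \<and> set xs \<subseteq> X \<and> a \<in> supp (prodl e N xs)))"
    by (rule LeastI_ex)
  then show ?thesis using False by (auto simp: word_len_def supp_prodl)
qed

lemma ball_char: "a \<in> ball_X e N X n \<longleftrightarrow> (\<exists>ys. set ys \<subseteq> X \<and> length ys \<le> n \<and> a \<in> Pl ys)"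
proof
  assume "a \<in> ball_X e N X n"
  then show "\<exists>ys. set ys \<subseteq> X \<and> length ys \<le> n \<and> a \<in> Pl ys"
    using wl_ex[of a] by (auto simp: ball_X_def)
next
  assume "\<exists>ys. set ys \<subseteq> X \<and> length ys \<le> n \<and> a \<in> Pl ys"
  then show "a \<in> ball_X e N X n" using wl_le by (force simp: ball_X_def)
qed

lemma ball_eq: "ball_X e N X n = (\<Union>ys\<in>{ys. set ys \<subseteq> X \<and> length ys \<le> n}. Pl ys)"
  using ball_char by blast

lemma ball_fin: "finite (ball_X e N X n)"
  unfolding ball_eq using Xfin by (auto intro!: finite_lists_length_le Pl_fin)

lemma e_ball: "e \<in> ball_X e N X n"
  using ball_char[of e n] by (auto intro!: exI[of _ "[]"])

lemma ball0: "ball_X e N X 0 = {e}"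
  using ball_char[of _ 0] e_ball[of 0] by auto

lemma ball_mono: "n \<le> m \<Longrightarrow> ball_X e N X n \<subseteq> ball_X e N X m"
  using ball_char by (meson order.trans subsetI)

definition bs :: "nat \<Rightarrow> real" where "bs n = dsize d (ball_X e N X n)"

lemma bs0: "bs 0 = 1" by (simp add: bs_def dsize_def ball0 d_e)

lemma bs_ge1: "bs n \<ge> 1"
proof -
  have "(d e)^2 \<le> (\<Sum>a\<in>ball_X e N X n. (d a)^2)"
    by (rule member_le_sum) (simp_all add: e_ball ball_fin)
  then show ?thesis by (simp add: bs_def dsize_def d_e)
qed

lemma ball_add: "ball_X e N X (n + m) \<subseteq> (\<Union>a\<in>ball_X e N X n. \<Union>b\<in>ball_X e N X m. SS N a b)"
proof
  fix c assume "c \<in> ball_X e N X (n + m)"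
  then obtain ys where ys: "set ys \<subseteq> X" "length ys \<le> n + m" "c \<in> Pl ys" using ball_char by blast
  have "ys = take n ys @ drop n ys" by simp
  then have "c \<in> Pl (take n ys @ drop n ys)" using ys(3) by simp
  then obtain a b where ab: "a \<in> Pl (take n ys)" "b \<in> Pl (drop n ys)" "c \<in> SS N a b"
    unfolding Pl_append by blast
  have "a \<in> ball_X e N X n" unfolding ball_char
    using ab(1) ys(1) by (intro exI[of _ "take n ys"]) (auto dest: in_set_takeD)
  moreover have "b \<in> ball_X e N X m" unfolding ball_char
    using ab(2) ys(1,2) by (intro exI[of _ "drop n ys"]) (auto dest: in_set_dropD)
  ultimately show "c \<in> (\<Union>a\<in>ball_X e N X n. \<Union>b\<in>ball_X e N X m. SS N a b)" using ab(3) by blast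
qed

lemma bs_sub: "bs (n + m) \<le> bs n * bs m"
proof -
  let ?f = "\<lambda>a. (d a)^2"
  let ?Bn = "ball_X e N X n" and ?Bm = "ball_X e N X m"
  have "bs (n + m) \<le> sum ?f (\<Union>a\<in>?Bn. \<Union>b\<in>?Bm. SS N a b)"
    unfolding bs_def dsize_def
    by (rule sum_mono2[OF _ ball_add]) (auto simp: ball_fin finS)
  also have "\<dots> \<le> (\<Sum>a\<in>?Bn. sum ?f (\<Union>b\<in>?Bm. SS N a b))"
    by (rule sum_UN_le) (auto simp: ball_fin finS)
  also have "\<dots> \<le> (\<Sum>a\<in>?Bn. \<Sum>b\<in>?Bm. sum ?f (SS N a b))"
    by (rule sum_mono, rule sum_UN_le) (auto simp: ball_fin finS)
  also have "\<dots> \<le> (\<Sum>a\<in>?Bn. \<Sum>b\<in>?Bm. (d a * d b)^2)"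
    by (intro sum_mono sum_d2_le)
  also have "\<dots> = (\<Sum>a\<in>?Bn. ?f a) * (\<Sum>b\<in>?Bm. ?f b)"
    by (simp add: sum_product power_mult_distrib)
  finally show ?thesis by (simp add: bs_def dsize_def)
qed

lemma boundary_sub:
  assumes "n \<ge> 1"
  shows "inner_boundary N X (ball_X e N X n) \<subseteq> ball_X e N X n - ball_X e N X (n - 1)"
proof
  fix a assume a: "a \<in> inner_boundary N X (ball_X e N X n)"
  then obtain x where x: "x \<in> X" "\<not> SS N a x \<subseteq> ball_X e N X n"
    by (auto simp: inner_boundary_def supp_bb)
  have "a \<notin> ball_X e N X (n - 1)"
  proof
    assume "a \<in> ball_X e N X (n - 1)"
    then obtain ys where ys: "set ys \<subseteq> X" "length ys \<le> n - 1" "a \<in> Pl ys" using ball_char by blast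
    have "SS N a x \<subseteq> Pl (ys @ [x])" unfolding Pl_append Pl_single using ys(3) by blast
    moreover have "Pl (ys @ [x]) \<subseteq> ball_X e N X n"
    proof
      fix z assume z: "z \<in> Pl (ys @ [x])"
      have "set (ys @ [x]) \<subseteq> X" "length (ys @ [x]) \<le> n" using ys x(1) assms by auto
      then show "z \<in> ball_X e N X n" using z ball_char by blast
    qed
    ultimately show False using x(2) by blast
  qed
  then show "a \<in> ball_X e N X n - ball_X e N X (n - 1)" using a by (auto simp: inner_boundary_def)
qed

lemma dsize_nonneg: "dsize d A \<ge> 0" by (simp add: dsize_def sum_nonneg)

lemma fol_le: "n \<ge> 1 \<Longrightarrow> folner_inn_X N d X \<le> 1 - bs (n - 1) / bs n"
proof -
  assume n: "n \<ge> 1"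
  let ?B = "ball_X e N X n" and ?B' = "ball_X e N X (n - 1)"
  have "dsize d (inner_boundary N X ?B) \<le> dsize d (?B - ?B')"
    unfolding dsize_def by (rule sum_mono2) (use boundary_sub[OF n] ball_fin in auto)
  also have "\<dots> = bs n - bs (n - 1)"
    unfolding dsize_def bs_def by (rule sum_diff) (auto simp: ball_fin ball_mono)
  finally have bd: "dsize d (inner_boundary N X ?B) \<le> bs n - bs (n - 1)" .
  have bpos: "bs n > 0" using bs_ge1[of n] by simp
  have "folner_inn_X N d X \<le> dsize d (inner_boundary N X ?B) / dsize d ?B"
    unfolding folner_inn_X_def
  proof (rule cInf_lower)
    show "dsize d (inner_boundary N X ?B) / dsize d ?B
      \<in> {dsize d (inner_boundary N X A) / dsize d A | A. finite A \<and> A \<noteq> {}}"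
      using ball_fin e_ball by blast
    show "bdd_below {dsize d (inner_boundary N X A) / dsize d A | A. finite A \<and> A \<noteq> {}}"
      by (rule bdd_belowI[of _ 0]) (auto simp: dsize_nonneg)
  qed
  also have "\<dots> \<le> (bs n - bs (n - 1)) / bs n"
    using bd bpos by (simp add: bs_def divide_right_mono)
  also have "\<dots> = 1 - bs (n - 1) / bs n" using bpos by (simp add: field_simps)
  finally show ?thesis .
qed

lemma growth_conv: "(\<lambda>n. root n (bs n)) \<longlonglongrightarrow> growth_X e N d X"
proof -
  have "convergent (\<lambda>n. root n (bs n))" by (rule root_conv[OF bs_ge1 bs_sub])
  then show ?thesis by (simp add: growth_X_def bs_def[abs_def] convergent_LIMSEQ_iff)
qed

lemma growth_ge1: "growth_X e N d X \<ge> 1"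
proof (rule LIMSEQ_le_const[OF growth_conv], intro exI allI impI)
  fix n :: nat assume "n \<ge> 1"
  then show "1 \<le> root n (bs n)" using bs_ge1[of n] by simp
qed

lemma fol_growth: "folner_inn_X N d X \<le> 1 - 1 / growth_X e N d X"
proof (rule ccontr)
  define F where "F = folner_inn_X N d X"
  define w where "w = growth_X e N d X"
  assume "\<not> folner_inn_X N d X \<le> 1 - 1 / growth_X e N d X"
  then have Fw: "F > 1 - 1 / w" by (simp add: F_def w_def)
  have w1: "w \<ge> 1" using growth_ge1 by (simp add: w_def)
  have F1: "F \<le> 1 - bs 0 / bs 1" using fol_le[of 1] by (simp add: F_def)
  have "bs 1 \<ge> 1" by (rule bs_ge1)
  then have "bs 0 / bs 1 > 0" by (simp add: bs0)
  then have Flt: "1 - F > 0" using F1 by simp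
  define c where "c = 1 / (1 - F)"
  have "1 - F < 1 / w" using Fw by simp
  then have wc: "w < c" unfolding c_def using Flt w1
    by (simp add: field_simps)
  have cpos: "c > 0" using Flt by (simp add: c_def)
  have step: "bs n \<ge> c * bs (n - 1)" if "n \<ge> 1" for n
  proof -
    have bpos: "bs n > 0" using bs_ge1[of n] by simp
    have "F \<le> 1 - bs (n - 1) / bs n" using fol_le[OF that] by (simp add: F_def)
    then have "bs (n - 1) / bs n \<le> 1 - F" by simp
    then have "bs (n - 1) \<le> (1 - F) * bs n" using bpos by (simp add: divide_le_eq)
    then have "bs (n - 1) / (1 - F) \<le> bs n" using Flt by (simp add: divide_le_eq mult.commute)
    then show ?thesis by (simp add: c_def)
  qed
  have pow: "bs n \<ge> c ^ n" for n
  proof (induction n)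
    case 0 then show ?case by (simp add: bs0)
  next
    case (Suc n)
    have "c ^ Suc n = c * c ^ n" by simp
    also have "\<dots> \<le> c * bs n" using Suc cpos by simp
    also have "\<dots> \<le> bs (Suc n)" using step[of "Suc n"] by simp
    finally show ?case .
  qed
  have "c \<le> w" unfolding w_def
  proof (rule LIMSEQ_le_const[OF growth_conv], intro exI allI impI)
    fix n :: nat assume n: "n \<ge> 1"
    have "root n (c ^ n) \<le> root n (bs n)"
      using pow[of n] n by (simp add: real_root_le_iff)
    moreover have "root n (c ^ n) = c" using n cpos by (simp add: real_root_pos2)
    ultimately show "c \<le> root n (bs n)" by simp
  qed
  then show False using wc by simp
qed

end


lemma FAX_facts:
  assumes "fusion_algebra e bar N d" "fgen_set e bar N Y"
  shows "folner_inn_X N d Y \<le> 1 - 1 / growth_X e N d Y \<and> growth_X e N d Y \<ge> 1"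
proof -
  interpret FAX e bar N d Y by (unfold_locales) (rule assms)+
  show ?thesis using fol_growth growth_ge1 by simp
qed

lemma folner_X_nonneg: "folner_inn_X N d Y \<ge> 0" if "\<And>a. d a \<ge> 1" for N d Y
  unfolding folner_inn_X_def
proof (rule cInf_greatest)
  show "{dsize d (inner_boundary N Y A) / dsize d A |A. finite A \<and> A \<noteq> {}} \<noteq> {}"
    by auto
  fix x assume "x \<in> {dsize d (inner_boundary N Y A) / dsize d A |A. finite A \<and> A \<noteq> {}}"
  then show "0 \<le> x" by (auto simp: dsize_def intro!: divide_nonneg_nonneg sum_nonneg)
qed

theorem proposition3p17:
  fixes e :: 'a and bar :: "'a \<Rightarrow> 'a" and N :: "'a \<Rightarrow> 'a \<Rightarrow> 'a \<Rightarrow> nat"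
    and d :: "'a \<Rightarrow> real" and X :: "'a set"
  assumes "fusion_algebra e bar N d"
    and "fgen_set e bar N X"
  shows "folner_inn_X N d X \<le> 1 - 1 / growth_X e N d X
         \<and> folner_inn e bar N d \<le> 1 - 1 / growth e bar N d"
proof -
  have facts: "folner_inn_X N d Y \<le> 1 - 1 / growth_X e N d Y \<and> growth_X e N d Y \<ge> 1"
    if "fgen_set e bar N Y" for Y using FAX_facts[OF assms(1) that] .
  have dge: "\<And>a. d a \<ge> 1" using assms(1) by (simp add: fusion_algebra_def)
  define Fs where "Fs = {folner_inn_X N d Y | Y. fgen_set e bar N Y}"
  define Gs where "Gs = {growth_X e N d Y | Y. fgen_set e bar N Y}"
  define t where "t = Inf Fs"
  define g where "g = Inf Gs"
  have Fne: "Fs \<noteq> {}" using assms(2) by (auto simp: Fs_def)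
  have Gne: "Gs \<noteq> {}" using assms(2) by (auto simp: Gs_def)
  have Fbdd: "bdd_below Fs" unfolding Fs_def
    by (rule bdd_belowI[of _ 0]) (auto intro: folner_X_nonneg dge)
  have tX: "t \<le> folner_inn_X N d X" unfolding t_def
    by (rule cInf_lower[OF _ Fbdd]) (use assms(2) in \<open>auto simp: Fs_def\<close>)
  have "t < 1"
  proof -
    have "growth_X e N d X \<ge> 1" using facts[OF assms(2)] by simp
    then have "1 - 1 / growth_X e N d X < 1" by simp
    then show ?thesis using tX facts[OF assms(2)] by linarith
  qed
  have "g \<ge> 1 / (1 - t)" unfolding g_def
  proof (rule cInf_greatest[OF Gne])
    fix w assume "w \<in> Gs"
    then obtain Y where Y: "fgen_set e bar N Y" "w = growth_X e N d Y" by (auto simp: Gs_def)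
    have "t \<le> folner_inn_X N d Y" unfolding t_def
      by (rule cInf_lower[OF _ Fbdd]) (use Y in \<open>auto simp: Fs_def\<close>)
    then have "t \<le> 1 - 1 / w" using facts[OF Y(1)] Y(2) by simp
    moreover have "w \<ge> 1" using facts[OF Y(1)] Y(2) by simp
    ultimately have "1 / w \<le> 1 - t" by simp
    then show "1 / (1 - t) \<le> w" using \<open>t < 1\<close> \<open>w \<ge> 1\<close>
      by (simp add: field_simps)
  qed
  moreover have "1 / (1 - t) > 0" using \<open>t < 1\<close> by simp
  ultimately have gpos: "g > 0" by linarith
  have "1 / g \<le> 1 - t"
  proof -
    have "1 \<le> g * (1 - t)" using \<open>g \<ge> 1 / (1 - t)\<close> \<open>t < 1\<close> by (simp add: field_simps)
    then show ?thesis using gpos by (simp add: field_simps)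
  qed
  then have "t \<le> 1 - 1 / g" by simp
  then show ?thesis using facts[OF assms(2)]
    by (simp add: t_def g_def Fs_def Gs_def folner_inn_def growth_def)
qed

end
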